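(* Let $z_{1},\ldots,z_{D'}$ be distinct points of $\mathbb{R}^{d}$ and let $D^{+}\geq2D'-1$. Consider the multivariate Hermite matrix whose columns are indexed by $\alpha\in\mathcal{I}_{D^{+}}$ and whose rows are the $D'$ rows $(p_{\alpha}(z_{i}))_{\alpha}$, $i=1,\ldots,D'$, followed by the $dD'$ rows given by the gradients $(\nabla p_{\alpha}(z_{i}))_{\alpha}$, $i=1,\ldots,D'$ (each gradient contributing $d$ rows, one per partial derivative). Then the rank of this matrix equals its number of rows, $D'(d+1)$.
   Context: For a multi-index $\alpha=(\alpha_{1},\ldots,\alpha_{d})\in\mathbb{Z}_{\geq0}^{d}$, $p_{\alpha}(z)=\prod_{i=1}^{d}(\pi_{i}z)^{\alpha_{i}}$, where $\pi_{i}$ is the $i$-th coordinate, and $|\alpha|=\sum_i\alpha_i$. $\mathcal{I}_{D^{+}}$ is the set of all multi-indices with $|\alpha|\leq D^{+}$. *)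

theory Defs
  imports "HOL-Analysis.Analysis" "Jordan_Normal_Form.DL_Rank"
begin

text \<open>Multi-indices alpha in Z_{>=0}^d are represented as lists of length d.
  multi_indices d D enumerates (without repetition) all multi-indices of length d
  with |alpha| <= D, i.e. the index set I_D.\<close>
fun multi_indices :: "nat \<Rightarrow> nat \<Rightarrow> nat list list" where
  "multi_indices 0 D = [[]]"
| "multi_indices (Suc d) D =
     concat (map (\<lambda>k. map (Cons k) (multi_indices d (D - k))) [0..<Suc D])"

text \<open>Points of R^d are functions nat => real (only coordinates j < d matter).
  p_alpha(z) = prod_j (z_j)^(alpha_j).\<close>
definition monomial_p :: "nat list \<Rightarrow> (nat \<Rightarrow> real) \<Rightarrow> real" where
  "monomial_p \<alpha> z = (\<Prod>j<length \<alpha>. z j ^ (\<alpha> ! j))"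

definition partial_p :: "nat list \<Rightarrow> nat \<Rightarrow> (nat \<Rightarrow> real) \<Rightarrow> real" where
  "partial_p \<alpha> j z = deriv (\<lambda>t. monomial_p \<alpha> (z(j := t))) (z j)"

text \<open>Multivariate Hermite matrix: rows 0..D'-1 are (p_alpha(z_i))_alpha;
  row D' + i*d + j is (d/dx_j p_alpha(z_i))_alpha for i < D', j < d.
  Columns are indexed by the multi-indices in I_{Dp}.\<close>
definition hermite_matrix :: "nat \<Rightarrow> nat \<Rightarrow> nat \<Rightarrow> (nat \<Rightarrow> nat \<Rightarrow> real) \<Rightarrow> real mat" where
  "hermite_matrix d D' Dp z =
     mat (D' * (d + 1)) (length (multi_indices d Dp))
       (\<lambda>(r, c). let \<alpha> = multi_indices d Dp ! c in
          if r < D' then monomial_p \<alpha> (z r)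
          else partial_p \<alpha> ((r - D') mod d) (z ((r - D') div d)))"

end

theory Submission
  imports Defs
begin


definition pd :: "((nat \<Rightarrow> real) \<Rightarrow> real) \<Rightarrow> nat \<Rightarrow> (nat \<Rightarrow> real) \<Rightarrow> real" where
  "pd f j w = deriv (\<lambda>t. f (w(j := t))) (w j)"

definition D1 :: "((nat \<Rightarrow> real) \<Rightarrow> real) \<Rightarrow> bool" where
  "D1 f \<longleftrightarrow> (\<forall>w j. (\<lambda>t. f (w(j := t))) differentiable (at (w j)))"

lemma D1_const: "D1 (\<lambda>w. c)" by (simp add: D1_def)

lemma D1_coord: "D1 (\<lambda>w. w l)"
  unfolding D1_def
proof (intro allI)
  fix w :: "nat \<Rightarrow> real" and j
  show "(\<lambda>t. (w(j := t)) l) differentiable (at (w j))"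
    by (cases "l = j") simp_all
qed

lemma D1_add: "D1 f \<Longrightarrow> D1 g \<Longrightarrow> D1 (\<lambda>w. f w + g w)"
  by (simp add: D1_def)

lemma D1_mult: "D1 f \<Longrightarrow> D1 g \<Longrightarrow> D1 (\<lambda>w. f w * g w)"
  by (simp add: D1_def)

lemma D1_diff: "D1 f \<Longrightarrow> D1 g \<Longrightarrow> D1 (\<lambda>w. f w - g w)"
  by (simp add: D1_def)

lemma D1_power: "D1 f \<Longrightarrow> D1 (\<lambda>w. f w ^ k)"
  by (simp add: D1_def)

lemma D1_prod: "finite A \<Longrightarrow> (\<And>a. a \<in> A \<Longrightarrow> D1 (f a)) \<Longrightarrow> D1 (\<lambda>w. \<Prod>a\<in>A. f a w)"
proof (induction A rule: finite_induct)
  case empty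
  then show ?case by (simp add: D1_const)
next
  case (insert x F)
  then show ?case by (simp add: D1_mult)
qed

lemma D1_sum: "finite A \<Longrightarrow> (\<And>a. a \<in> A \<Longrightarrow> D1 (f a)) \<Longrightarrow> D1 (\<lambda>w. \<Sum>a\<in>A. f a w)"
proof (induction A rule: finite_induct)
  case empty
  then show ?case by (simp add: D1_const)
next
  case (insert x F)
  then show ?case by (simp add: D1_add)
qed

lemma D1_monomial: "D1 (monomial_p \<alpha>)"
  unfolding monomial_p_def
  by (rule D1_prod) (auto intro: D1_power D1_coord)

lemma pd_DERIV: "D1 f \<Longrightarrow> ((\<lambda>t. f (w(j := t))) has_field_derivative pd f j w) (at (w j))"
  unfolding pd_def D1_def using DERIV_deriv_iff_real_differentiable by blast

lemma pd_mult: assumes "D1 f" "D1 g"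
  shows "pd (\<lambda>w. f w * g w) j w = pd f j w * g w + f w * pd g j w"
proof -
  have "((\<lambda>t. f (w(j := t)) * g (w(j := t))) has_field_derivative
      pd f j w * g (w(j := w j)) + pd g j w * f (w(j := w j))) (at (w j))"
    by (rule DERIV_mult) (use assms pd_DERIV in auto)
  then show ?thesis unfolding pd_def[of "\<lambda>w. f w * g w"]
    by (subst DERIV_imp_deriv) (auto simp: mult.commute)
qed

lemma pd_add: assumes "D1 f" "D1 g"
  shows "pd (\<lambda>w. f w + g w) j w = pd f j w + pd g j w"
proof -
  have "((\<lambda>t. f (w(j := t)) + g (w(j := t))) has_field_derivative
      pd f j w + pd g j w) (at (w j))"
    by (rule DERIV_add) (use assms pd_DERIV in auto)
  then show ?thesis unfolding pd_def[of "\<lambda>w. f w + g w"]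
    by (subst DERIV_imp_deriv) auto
qed

lemma pd_cmult: assumes "D1 f"
  shows "pd (\<lambda>w. c * f w) j w = c * pd f j w"
proof -
  have "((\<lambda>t. c * f (w(j := t))) has_field_derivative c * pd f j w) (at (w j))"
    by (rule DERIV_cmult) (use assms pd_DERIV in auto)
  then show ?thesis unfolding pd_def[of "\<lambda>w. c * f w"]
    by (subst DERIV_imp_deriv) auto
qed

lemma pd_const: "pd (\<lambda>w. c) j w = 0"
  unfolding pd_def by (simp add: DERIV_imp_deriv)

lemma pd_affine: "pd (\<lambda>w. w l - c) j w = (if l = j then 1 else 0)"
proof (cases "l = j")
  case True
  have "((\<lambda>t. t - c) has_field_derivative 1) (at (w j))"
    by (auto intro!: derivative_eq_intros)
  then show ?thesis unfolding pd_def using True by (simp add: DERIV_imp_deriv)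
next
  case False
  then show ?thesis unfolding pd_def by (simp add: DERIV_imp_deriv)
qed

lemma D1_affine: "D1 (\<lambda>w. w l - c)"
  by (intro D1_diff D1_coord D1_const)



definition Mset :: "nat \<Rightarrow> nat \<Rightarrow> nat list set" where
  "Mset d m = {\<alpha>. length \<alpha> = d \<and> sum_list \<alpha> \<le> m}"

lemma set_multi_indices: "set (multi_indices d m) = Mset d m"
proof (induction d arbitrary: m)
  case 0
  then show ?case by (auto simp: Mset_def)
next
  case (Suc d)
  show ?case
  proof (intro subset_antisym subsetI)
    fix \<alpha> assume "\<alpha> \<in> set (multi_indices (Suc d) m)"
    then obtain k \<beta> where "k \<le> m" "\<alpha> = k # \<beta>" "\<beta> \<in> Mset d (m - k)"
      using Suc by auto
    then show "\<alpha> \<in> Mset (Suc d) m" by (auto simp: Mset_def)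
  next
    fix \<alpha> assume a: "\<alpha> \<in> Mset (Suc d) m"
    then obtain k \<beta> where ab: "\<alpha> = k # \<beta>" by (cases \<alpha>) (auto simp: Mset_def)
    with a have "k \<le> m" "\<beta> \<in> Mset d (m - k)" by (auto simp: Mset_def)
    then show "\<alpha> \<in> set (multi_indices (Suc d) m)"
      using Suc ab by force
  qed
qed

lemma finite_Mset: "finite (Mset d m)"
  by (metis List.finite_set set_multi_indices)

lemma monomial_zero: "monomial_p (replicate d 0) w = 1"
  by (simp add: monomial_p_def)

lemma monomial_inc:
  assumes "l < length \<alpha>"
  shows "monomial_p (\<alpha>[l := \<alpha> ! l + 1]) w = w l * monomial_p \<alpha> w"
proof -
  have f: "finite {..<length \<alpha>}" by simp
  have "monomial_p (\<alpha>[l := \<alpha> ! l + 1]) w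
      = w l ^ (\<alpha> ! l + 1) * (\<Prod>j\<in>{..<length \<alpha>} - {l}. w j ^ (\<alpha>[l := \<alpha> ! l + 1] ! j))"
    unfolding monomial_p_def using assms by (simp add: prod.remove[OF f])
  also have "(\<Prod>j\<in>{..<length \<alpha>} - {l}. w j ^ (\<alpha>[l := \<alpha> ! l + 1] ! j))
      = (\<Prod>j\<in>{..<length \<alpha>} - {l}. w j ^ (\<alpha> ! j))"
    by (rule prod.cong) auto
  also have "monomial_p \<alpha> w = w l ^ (\<alpha> ! l) * (\<Prod>j\<in>{..<length \<alpha>} - {l}. w j ^ (\<alpha> ! j))"
    unfolding monomial_p_def using assms by (simp add: prod.remove[OF f])
  ultimately show ?thesis by simp
qed

definition rep :: "nat \<Rightarrow> nat \<Rightarrow> ((nat \<Rightarrow> real) \<Rightarrow> real) \<Rightarrow> bool" where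
  "rep d m f \<longleftrightarrow> (\<exists>S a. finite S \<and> S \<subseteq> Mset d m \<and> f = (\<lambda>w. \<Sum>\<alpha>\<in>S. a \<alpha> * monomial_p \<alpha> w))"

lemma rep_const: "rep d m (\<lambda>w. c)"
  unfolding rep_def
  by (rule exI[of _ "{replicate d 0}"], rule exI[of _ "\<lambda>_. c"])
     (auto simp: Mset_def monomial_zero sum_list_replicate)

lemma rep_mono: "rep d m f \<Longrightarrow> m \<le> m' \<Longrightarrow> rep d m' f"
  unfolding rep_def Mset_def by fastforce

lemma rep_smult: "rep d m f \<Longrightarrow> rep d m (\<lambda>w. c * f w)"
  unfolding rep_def
proof (elim exE conjE)
  fix S a assume "finite S" "S \<subseteq> Mset d m" "f = (\<lambda>w. \<Sum>\<alpha>\<in>S. a \<alpha> * monomial_p \<alpha> w)"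
  then show "\<exists>S a. finite S \<and> S \<subseteq> Mset d m \<and> (\<lambda>w. c * f w) = (\<lambda>w. \<Sum>\<alpha>\<in>S. a \<alpha> * monomial_p \<alpha> w)"
    by (intro exI[of _ S] exI[of _ "\<lambda>\<alpha>. c * a \<alpha>"]) (auto simp: sum_distrib_left mult.assoc)
qed

lemma sum_extend:
  assumes "finite T" "S \<subseteq> T"
  shows "(\<Sum>x\<in>T. (if x \<in> S then g x else 0)) = (\<Sum>x\<in>S. g x)"
proof -
  have "(\<Sum>x\<in>T. (if x \<in> S then g x else 0)) = (\<Sum>x\<in>T \<inter> S. g x)"
    using assms(1) by (simp add: sum.inter_restrict)
  also have "T \<inter> S = S" using assms(2) by blast
  finally show ?thesis .
qed

lemma rep_add: "rep d m f \<Longrightarrow> rep d m g \<Longrightarrow> rep d m (\<lambda>w. f w + g w)"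
  unfolding rep_def
proof (elim exE conjE)
  fix S a S' a'
  assume S: "finite S" "S \<subseteq> Mset d m" "f = (\<lambda>w. \<Sum>\<alpha>\<in>S. a \<alpha> * monomial_p \<alpha> w)"
    and S': "finite S'" "S' \<subseteq> Mset d m" "g = (\<lambda>w. \<Sum>\<alpha>\<in>S'. a' \<alpha> * monomial_p \<alpha> w)"
  define b where "b \<alpha> = (if \<alpha> \<in> S then a \<alpha> else 0) + (if \<alpha> \<in> S' then a' \<alpha> else 0)" for \<alpha>
  have "(\<Sum>\<alpha>\<in>S \<union> S'. b \<alpha> * monomial_p \<alpha> w) = f w + g w" for w
  proof -
    have "(\<Sum>\<alpha>\<in>S \<union> S'. b \<alpha> * monomial_p \<alpha> w)
       = (\<Sum>\<alpha>\<in>S \<union> S'. (if \<alpha> \<in> S then a \<alpha> * monomial_p \<alpha> w else 0))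
       + (\<Sum>\<alpha>\<in>S \<union> S'. (if \<alpha> \<in> S' then a' \<alpha> * monomial_p \<alpha> w else 0))"
      by (subst sum.distrib[symmetric], rule sum.cong) (auto simp: b_def distrib_right)
    also have "\<dots> = f w + g w"
      using S S' by (simp add: sum_extend)
    finally show ?thesis .
  qed
  then show "\<exists>S a. finite S \<and> S \<subseteq> Mset d m \<and> (\<lambda>w. f w + g w) = (\<lambda>w. \<Sum>\<alpha>\<in>S. a \<alpha> * monomial_p \<alpha> w)"
    using S S' by (intro exI[of _ "S \<union> S'"] exI[of _ b]) auto
qed

lemma rep_mult_coord:
  assumes "rep d m f" "l < d"
  shows "rep d (Suc m) (\<lambda>w. w l * f w)"
proof -
  obtain S a where S: "finite S" "S \<subseteq> Mset d m" "f = (\<lambda>w. \<Sum>\<alpha>\<in>S. a \<alpha> * monomial_p \<alpha> w)"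
    using assms(1) unfolding rep_def by blast
  define inc where "inc \<alpha> = \<alpha>[l := \<alpha> ! l + 1]" for \<alpha> :: "nat list"
  define dec where "dec \<alpha> = \<alpha>[l := \<alpha> ! l - 1]" for \<alpha> :: "nat list"
  have len: "\<alpha> \<in> S \<Longrightarrow> length \<alpha> = d" for \<alpha> using S(2) by (auto simp: Mset_def)
  have di: "\<alpha> \<in> S \<Longrightarrow> dec (inc \<alpha>) = \<alpha>" for \<alpha>
    using len[of \<alpha>] assms(2) by (auto simp: inc_def dec_def)
  have inj: "inj_on inc S" by (rule inj_on_inverseI[of _ dec]) (use di in auto)
  have sub: "inc ` S \<subseteq> Mset d (Suc m)"
  proof
    fix \<beta> assume "\<beta> \<in> inc ` S"
    then obtain \<alpha> where "\<alpha> \<in> S" "\<beta> = inc \<alpha>" by blast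
    moreover have "sum_list (\<alpha>[l := \<alpha> ! l + 1]) = sum_list \<alpha> + 1" if "l < length \<alpha>"
      using that by (induction \<alpha> arbitrary: l) (auto split: nat.splits)
    ultimately show "\<beta> \<in> Mset d (Suc m)"
      using S(2) assms(2) len by (auto simp: inc_def Mset_def)
  qed
  have "w l * f w = (\<Sum>\<beta>\<in>inc ` S. (a \<circ> dec) \<beta> * monomial_p \<beta> w)" for w
  proof -
    have "w l * f w = (\<Sum>\<alpha>\<in>S. a \<alpha> * (w l * monomial_p \<alpha> w))"
      using S(3) by (simp add: sum_distrib_left mult.left_commute)
    also have "\<dots> = (\<Sum>\<alpha>\<in>S. (a \<circ> dec) (inc \<alpha>) * monomial_p (inc \<alpha>) w)"
      by (rule sum.cong) (use di len assms(2) monomial_inc in \<open>auto simp: inc_def\<close>)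
    also have "\<dots> = (\<Sum>\<beta>\<in>inc ` S. (a \<circ> dec) \<beta> * monomial_p \<beta> w)"
      by (rule sum.reindex[OF inj, symmetric, unfolded comp_def])
    finally show ?thesis .
  qed
  then show ?thesis unfolding rep_def using S(1) sub
    by (intro exI[of _ "inc ` S"] exI[of _ "a \<circ> dec"]) auto
qed

lemma rep_mult_affine:
  assumes "rep d m f" "l < d"
  shows "rep d (Suc m) (\<lambda>w. (w l - c) * f w)"
proof -
  have "rep d (Suc m) (\<lambda>w. w l * f w + (- c) * f w)"
    by (intro rep_add rep_mult_coord assms rep_smult rep_mono[OF assms(1)]) simp
  moreover have "(\<lambda>w. w l * f w + (- c) * f w) = (\<lambda>w. (w l - c) * f w)"
    by (simp add: algebra_simps)
  ultimately show ?thesis by simp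
qed

lemma rep_D1: "rep d m f \<Longrightarrow> D1 f"
  unfolding rep_def by (auto intro!: D1_sum D1_mult D1_const D1_monomial)

lemma rep_prod:
  assumes "finite K" "\<And>k. k \<in> K \<Longrightarrow> jj k < d"
  shows "rep d (2 * card K) (\<lambda>w. \<Prod>k\<in>K. (w (jj k) - c k) * (w (jj k) - c k))"
  using assms
proof (induction K rule: finite_induct)
  case empty
  then show ?case by (simp add: rep_const)
next
  case (insert x F)
  have r: "rep d (2 * card F) (\<lambda>w. \<Prod>k\<in>F. (w (jj k) - c k) * (w (jj k) - c k))"
    using insert by auto
  have "rep d (Suc (Suc (2 * card F))) (\<lambda>w. (w (jj x) - c x) * ((w (jj x) - c x) *
      (\<Prod>k\<in>F. (w (jj k) - c k) * (w (jj k) - c k))))"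
    by (intro rep_mult_affine r) (use insert in auto)
  moreover have "(\<lambda>w. \<Prod>k\<in>insert x F. (w (jj k) - c k) * (w (jj k) - c k)) =
     (\<lambda>w. (w (jj x) - c x) * ((w (jj x) - c x) *
      (\<Prod>k\<in>F. (w (jj k) - c k) * (w (jj k) - c k))))"
    by (rule ext, subst prod.insert[OF insert(1,2)], simp only: mult.assoc)
  ultimately show ?case using insert by simp
qed



context vec_space
begin

lemma zero_in_span': "W \<subseteq> carrier_vec n \<Longrightarrow> 0\<^sub>v n \<in> span W"
  using sumlist_in_span[of W "[]"] by simp

lemma span_full:
  assumes W: "W \<subseteq> carrier_vec n" and units: "\<And>r. r < n \<Longrightarrow> unit_vec n r \<in> span W"
  shows "span W = carrier_vec n"
proof
  show "span W \<subseteq> carrier_vec n" using span_is_subset2[OF W] .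
  have "set (unit_vecs n) \<subseteq> span W" using units unfolding unit_vecs_def by auto
  then have "span (set (unit_vecs n)) \<subseteq> span W" by (rule span_subsetI[OF W])
  then show "carrier_vec n \<subseteq> span W" using span_unit_vecs_is_carrier by simp
qed

lemma rank_full:
  assumes "span (set (cols A)) = carrier_vec n"
  shows "rank A = n"
proof -
  have "rank A = vectorspace.dim class_ring (V\<lparr>carrier := carrier_vec n\<rparr>)"
    unfolding rank_def assms ..
  also have "V\<lparr>carrier := carrier_vec n\<rparr> = V" by (simp add: module_vec_def)
  finally show ?thesis using dim_is_n by simp
qed

lemma combo_in_span:
  assumes W: "W \<subseteq> carrier_vec n" and R: "finite R" "R \<subseteq> {..<n}"
    and units: "\<And>r. r \<in> R \<Longrightarrow> unit_vec n r \<in> span W"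
  shows "vec n (\<lambda>k. if k \<in> R then f k else 0) \<in> span W"
  using R units
proof (induction R rule: finite_induct)
  case empty
  then show ?case using zero_in_span'[OF W] by (simp add: zero_vec_def)
next
  case (insert x F)
  have "f x \<cdot>\<^sub>v unit_vec n x + vec n (\<lambda>k. if k \<in> F then f k else 0) \<in> span W"
    by (rule span_add1[OF W]) (use insert smult_in_span[OF W] in auto)
  moreover have "f x \<cdot>\<^sub>v unit_vec n x + vec n (\<lambda>k. if k \<in> F then f k else 0)
     = vec n (\<lambda>k. if k \<in> insert x F then f k else 0)"
    using insert by (intro eq_vecI) auto
  ultimately show ?case by simp
qed

end



definition Lr :: "nat \<Rightarrow> nat \<Rightarrow> (nat \<Rightarrow> nat \<Rightarrow> real) \<Rightarrow> nat \<Rightarrow> ((nat \<Rightarrow> real) \<Rightarrow> real) \<Rightarrow> real" where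
  "Lr d D' z r f = (if r < D' then f (z r) else pd f ((r - D') mod d) (z ((r - D') div d)))"

lemma Lr_lin: "D1 f \<Longrightarrow> D1 g \<Longrightarrow> Lr d D' z r (\<lambda>w. c * f w + g w) = c * Lr d D' z r f + Lr d D' z r g"
  unfolding Lr_def by (simp add: pd_add pd_cmult D1_mult D1_const)

lemma Lr_zero: "Lr d D' z r (\<lambda>w. 0) = 0"
  unfolding Lr_def by (simp add: pd_const)


theorem lemma5:
  fixes d D' Dp :: nat and z :: "nat \<Rightarrow> nat \<Rightarrow> real"
  assumes distinct: "\<forall>i<D'. \<forall>i'<D'. i \<noteq> i' \<longrightarrow> (\<exists>j<d. z i j \<noteq> z i' j)"
    and deg: "int Dp \<ge> 2 * int D' - 1"
  shows "vec_space.rank (D' * (d + 1)) (hermite_matrix d D' Dp z) = D' * (d + 1)"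
proof -
  define n where "n = D' * (d + 1)"
  interpret V: vec_space "TYPE(real)" n .
  define A where "A = hermite_matrix d D' Dp z"
  define mi where "mi = multi_indices d Dp"
  define W where "W = set (cols A)"
  let ?L = "Lr d D' z"
  have A: "A \<in> carrier_mat n (length mi)"
    unfolding A_def hermite_matrix_def mi_def n_def by simp
  have W: "W \<subseteq> carrier_vec n" unfolding W_def using A cols_dim[of A] by auto
  have colin: "vec n (\<lambda>r. ?L r (monomial_p \<alpha>)) \<in> W" if "\<alpha> \<in> set mi" for \<alpha>
  proof -
    obtain c where c: "c < length mi" "\<alpha> = mi ! c" using \<open>\<alpha> \<in> set mi\<close> by (metis in_set_conv_nth)
    have "col A c = vec n (\<lambda>r. ?L r (monomial_p \<alpha>))"
      using A c by (intro eq_vecI)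
        (auto simp: A_def hermite_matrix_def Lr_def partial_p_def pd_def mi_def n_def Let_def)
    moreover have "col A c \<in> set (cols A)" using A c by (simp add: cols_def)
    ultimately show ?thesis unfolding W_def by simp
  qed
  have sum_in: "vec n (\<lambda>r. ?L r (\<lambda>w. \<Sum>\<alpha>\<in>S. a \<alpha> * monomial_p \<alpha> w)) \<in> V.span W"
    if "finite S" "S \<subseteq> set mi" for S a
    using that
  proof (induction S rule: finite_induct)
    case empty
    then show ?case using V.zero_in_span'[OF W] by (simp add: Lr_zero zero_vec_def)
  next
    case (insert x F)
    have eq: "vec n (\<lambda>r. ?L r (\<lambda>w. \<Sum>\<alpha>\<in>insert x F. a \<alpha> * monomial_p \<alpha> w))
      = a x \<cdot>\<^sub>v vec n (\<lambda>r. ?L r (monomial_p x)) + vec n (\<lambda>r. ?L r (\<lambda>w. \<Sum>\<alpha>\<in>F. a \<alpha> * monomial_p \<alpha> w))"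
    proof (rule eq_vecI)
      fix r assume "r < dim_vec (a x \<cdot>\<^sub>v vec n (\<lambda>r. ?L r (monomial_p x)) + vec n (\<lambda>r. ?L r (\<lambda>w. \<Sum>\<alpha>\<in>F. a \<alpha> * monomial_p \<alpha> w)))"
      then have r: "r < n" by simp
      have "?L r (\<lambda>w. \<Sum>\<alpha>\<in>insert x F. a \<alpha> * monomial_p \<alpha> w)
          = ?L r (\<lambda>w. a x * monomial_p x w + (\<Sum>\<alpha>\<in>F. a \<alpha> * monomial_p \<alpha> w))"
        using insert(1,2) by simp
      also have "\<dots> = a x * ?L r (monomial_p x) + ?L r (\<lambda>w. \<Sum>\<alpha>\<in>F. a \<alpha> * monomial_p \<alpha> w)"
        by (rule Lr_lin[OF D1_monomial]) (intro D1_sum insert(1) D1_mult D1_const D1_monomial)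
      finally show "vec n (\<lambda>r. ?L r (\<lambda>w. \<Sum>\<alpha>\<in>insert x F. a \<alpha> * monomial_p \<alpha> w)) $ r = 
          (a x \<cdot>\<^sub>v vec n (\<lambda>r. ?L r (monomial_p x)) + vec n (\<lambda>r. ?L r (\<lambda>w. \<Sum>\<alpha>\<in>F. a \<alpha> * monomial_p \<alpha> w))) $ r"
        using r by simp
    qed simp
    have "vec n (\<lambda>r. ?L r (monomial_p x)) \<in> V.span W"
      using colin[of x] insert(4) V.in_own_span[OF W] by blast
    then show ?case unfolding eq
      by (intro V.span_add1[OF W] V.smult_in_span[OF W]) (use insert in auto)
  qed
  have rep_in: "vec n (\<lambda>r. ?L r f) \<in> V.span W" if R: "rep d Dp f" for f
  proof -
    obtain S a where "finite S" "S \<subseteq> Mset d Dp" "f = (\<lambda>w. \<Sum>\<alpha>\<in>S. a \<alpha> * monomial_p \<alpha> w)"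
      using R unfolding rep_def by blast
    then show ?thesis using sum_in[of S a] by (simp add: mi_def set_multi_indices)
  qed

  define jj where "jj i k = (SOME j. j < d \<and> z i j \<noteq> z k j)" for i k
  have jj: "jj i k < d \<and> z i (jj i k) \<noteq> z k (jj i k)" if "i < D'" "k < D'" "k \<noteq> i" for i k
  proof -
    have "\<exists>j. j < d \<and> z i j \<noteq> z k j" using distinct that by metis
    then show ?thesis unfolding jj_def by (rule someI_ex)
  qed
  define P where "P i w = (\<Prod>k\<in>{..<D'} - {i}. (w (jj i k) - z k (jj i k)) * (w (jj i k) - z k (jj i k)))" for i w
  have P_rep: "rep d (2 * (D' - 1)) (P i)" if i: "i < D'" for i
  proof -
    have "rep d (2 * card ({..<D'} - {i})) (\<lambda>w. \<Prod>k\<in>{..<D'} - {i}. (w (jj i k) - z k (jj i k)) * (w (jj i k) - z k (jj i k)))"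
      by (rule rep_prod) (use jj i in auto)
    moreover have "card ({..<D'} - {i}) = D' - 1" using i by simp
    ultimately show ?thesis by (simp add: P_def[abs_def])
  qed
  have P_D1: "D1 (P i)" if "i < D'" for i using rep_D1[OF P_rep[OF that]] .
  have P_zi: "P i (z i) \<noteq> 0" if i: "i < D'" for i
    unfolding P_def using jj i by auto
  have P_zk: "P i (z k) = 0" if "i < D'" "k < D'" "k \<noteq> i" for i k
    unfolding P_def using that by (auto intro!: bexI[of _ k])
  have pdP_zk: "pd (P i) j' (z k) = 0" if ik: "i < D'" "k < D'" "k \<noteq> i" for i k j'
  proof -
    define h where "h w = w (jj i k) - z k (jj i k)" for w
    define Q where "Q w = (\<Prod>k'\<in>{..<D'} - {i} - {k}. (w (jj i k') - z k' (jj i k')) * (w (jj i k') - z k' (jj i k')))" for w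
    have Peq: "P i = (\<lambda>w. (h w * h w) * Q w)"
      unfolding P_def h_def Q_def using ik by (intro ext) (simp add: prod.remove[of _ k])
    have Dh: "D1 h" unfolding h_def[abs_def] by (rule D1_affine)
    have DQ: "D1 Q" unfolding Q_def[abs_def] by (intro D1_prod D1_mult D1_affine) auto
    have hz: "h (z k) = 0" by (simp add: h_def)
    have "pd (\<lambda>w. h w * h w) j' (z k) = 0" using pd_mult[OF Dh Dh] hz by simp
    then show ?thesis unfolding Peq using pd_mult[OF D1_mult[OF Dh Dh] DQ] hz by simp
  qed
  have Dp_ge: "Suc (2 * (D' - 1)) \<le> Dp" if "i < D'" for i using that deg by linarith
  have dec: "r = D' + ((r - D') div d) * d + (r - D') mod d" "(r - D') div d < D'" "(r - D') mod d < d"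
    if "D' \<le> r" "r < n" for r
  proof -
    have "r - D' < D' * d" using that by (simp add: n_def)
    then have d0: "d > 0" by (cases d) auto
    show "r = D' + ((r - D') div d) * d + (r - D') mod d" using that by simp
    show "(r - D') div d < D'" using \<open>r - D' < D' * d\<close> d0 by (simp add: div_less_iff_less_mult mult.commute)
    show "(r - D') mod d < d" using d0 by simp
  qed
  have deriv_units: "unit_vec n (D' + i * d + j) \<in> V.span W" if i: "i < D'" and j: "j < d" for i j
  proof -
    define g where "g w = (w j - z i j) * P i w" for w
    have "rep d (Suc (2 * (D' - 1))) g"
      unfolding g_def[abs_def] by (rule rep_mult_affine[OF P_rep[OF i] j])
    then have "rep d Dp g" using rep_mono Dp_ge[OF i] by blast
    then have inspan: "vec n (\<lambda>r. ?L r g) \<in> V.span W" by (rule rep_in)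
    have Dg: "pd g j' w = (if j = j' then 1 else 0) * P i w + (w j - z i j) * pd (P i) j' w" for j' w
      unfolding g_def[abs_def] using pd_mult[OF D1_affine P_D1[OF i]] pd_affine by simp
    have veq: "vec n (\<lambda>r. ?L r g) = P i (z i) \<cdot>\<^sub>v unit_vec n (D' + i * d + j)"
    proof (rule eq_vecI)
      fix r assume "r < dim_vec (P i (z i) \<cdot>\<^sub>v unit_vec n (D' + i * d + j))"
      then have r: "r < n" by simp
      show "vec n (\<lambda>r. ?L r g) $ r = (P i (z i) \<cdot>\<^sub>v unit_vec n (D' + i * d + j)) $ r"
      proof (cases "r < D'")
        case True
        then show ?thesis using r P_zk[OF i True] by (cases "r = i") (auto simp: Lr_def g_def unit_vec_def)
      next
        case False
        define k where "k = (r - D') div d"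
        define j' where "j' = (r - D') mod d"
        have rk: "r = D' + k * d + j'" "k < D'" "j' < d" using dec[of r] False r unfolding k_def j'_def by auto
        have Lg: "?L r g = pd g j' (z k)" using False unfolding Lr_def k_def j'_def by simp
        show ?thesis
        proof (cases "k = i")
          case True
          have "r = D' + i * d + j \<longleftrightarrow> j' = j" using rk True by auto
          then show ?thesis using r Lg Dg True by (auto simp: unit_vec_def)
        next
          case False
          have "r \<noteq> D' + i * d + j"
          proof
            assume "r = D' + i * d + j"
            then have "k * d + j' = i * d + j" using rk by simp
            then have "(k * d + j') div d = (i * d + j) div d" by simp
            then show False using rk j False by simp
          qed
          then show ?thesis using r Lg Dg P_zk[OF i rk(2) False] pdP_zk[OF i rk(2) False] by (simp add: unit_vec_def)
        qed
      qed
    qed simp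
    have "unit_vec n (D' + i * d + j) = (1 / P i (z i)) \<cdot>\<^sub>v vec n (\<lambda>r. ?L r g)"
      unfolding veq using P_zi[OF i] by (simp add: smult_smult_assoc)
    then show ?thesis using V.smult_in_span[OF W inspan] by simp
  qed
  have der_units: "unit_vec n r \<in> V.span W" if "r \<in> {D'..<n}" for r
    using deriv_units[of "(r - D') div d" "(r - D') mod d"] dec[of r] that by auto
  have value_units: "unit_vec n i \<in> V.span W" if i: "i < D'" for i
  proof -
    define v where "v = vec n (\<lambda>r. ?L r (P i))"
    have "rep d Dp (P i)" using rep_mono[OF P_rep[OF i]] Dp_ge[OF i] by simp
    then have vin: "v \<in> V.span W" unfolding v_def by (rule rep_in)
    define u where "u = vec n (\<lambda>k. if k \<in> {D'..<n} then - (v $ k) else 0)"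
    have uin: "u \<in> V.span W" unfolding u_def
      by (rule V.combo_in_span[OF W]) (use der_units in auto)
    have "v + u = P i (z i) \<cdot>\<^sub>v unit_vec n i"
    proof (rule eq_vecI)
      fix r assume "r < dim_vec (P i (z i) \<cdot>\<^sub>v unit_vec n i)"
      then have r: "r < n" by simp
      show "(v + u) $ r = (P i (z i) \<cdot>\<^sub>v unit_vec n i) $ r"
      proof (cases "r < D'")
        case True
        then show ?thesis using r P_zk[OF i True] i
          by (cases "r = i") (auto simp: u_def v_def Lr_def unit_vec_def)
      next
        case False
        then show ?thesis using r i by (auto simp: u_def v_def)
      qed
    qed (simp add: u_def v_def)
    then have "unit_vec n i = (1 / P i (z i)) \<cdot>\<^sub>v (v + u)"
      using P_zi[OF i] by (simp add: smult_smult_assoc)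
    then show ?thesis using V.smult_in_span[OF W V.span_add1[OF W vin uin]] by simp
  qed
  have "V.span W = carrier_vec n"
  proof (rule V.span_full[OF W])
    fix r assume "r < n"
    then show "unit_vec n r \<in> V.span W"
      using value_units der_units by (cases "r < D'") auto
  qed
  then have "V.rank A = n" unfolding W_def by (rule V.rank_full)
  then show ?thesis unfolding A_def n_def .
qed
end
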